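(* Consider the deterministic tandem system TSC(RO) described in the context, with $n$ jobs, satisfying for some constants $\lambda>0$, $\mu_1,\dots,\mu_J>0$, $\Gamma_a,\Gamma_{s,1},\dots,\Gamma_{s,J}\ge 0$: $$\Big|\sum_{i=k+1}^{n}U_i-\lambda^{-1}(n-k)\Big|\le \Gamma_a\,\phi(n-k),\qquad k=0,1,\dots,n-1,$$ $$\Big|\sum_{i=k+1}^{n}V^j_i-\mu_j^{-1}(n-k)\Big|\le \Gamma_{s,j}\,\phi(n-k),\qquad k=0,1,\dots,n-1,\ j=1,\dots,J.$$ Let $\Gamma=\max(\Gamma_a,\Gamma_{s,1},\dots,\Gamma_{s,J})$ and assume $\lambda\Gamma\ge e^{2e}$ and $\rho^*:=\lambda/\min_j\mu_j<1$. Then the sojourn time of the $n$-th job satisfies $$W_n\le \frac{7J^2\Gamma^2\lambda}{1-\rho^*}\,\ln\ln\frac{J\lambda\Gamma}{1-\rho^*}+J\lambda^{-1}.$$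
   Context: $\phi(x)=\sqrt{x\ln\ln x}$ for $x\ge e^e$ and $\phi(x)=1$ for $x<e^e$. TSC(RO): servers $S_1,\dots,S_J$ in tandem, initially empty, $n$ jobs. Job $i$ arrives to the buffer of $S_1$ at time $\sum_{l=1}^i U_l$ (nonnegative deterministic interarrival times $U_1,\dots,U_n$, $U_1$ being the arrival time of job 1). Each server processes jobs in FIFO order, is work-conserving, buffers are infinite; job $i$ requires service time $V^j_i\ge 0$ at $S_j$; after service at $S_j$ it joins the buffer of $S_{j+1}$, and after $S_J$ it leaves. The sojourn time $W_n$ of job $n$ is the time between its arrival at $S_1$ and its service completion at $S_J$. *)

theory Defs
  imports Complex_Main
begin

definition phi :: "real \<Rightarrow> real" where
  "phi x = (if x \<ge> exp (exp 1) then sqrt (x * ln (ln x)) else 1)"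

definition arrival :: "(nat \<Rightarrow> real) \<Rightarrow> nat \<Rightarrow> real" where
  "arrival U i = (\<Sum>l=1..i. U l)"

text \<open>dep U V j i: service completion time of job i at server S_j in the tandem
  of FIFO, work-conserving, infinite-buffer servers, initially empty.
  Station 0 is the arrival process; job 0 is a fictitious job (empty system).\<close>
fun dep :: "(nat \<Rightarrow> real) \<Rightarrow> (nat \<Rightarrow> nat \<Rightarrow> real) \<Rightarrow> nat \<Rightarrow> nat \<Rightarrow> real" where
  "dep U V 0 i = arrival U i"
| "dep U V (Suc j) 0 = 0"
| "dep U V (Suc j) (Suc i) = max (dep U V (Suc j) i) (dep U V j (Suc i)) + V (Suc j) (Suc i)"

definition sojourn :: "(nat \<Rightarrow> real) \<Rightarrow> (nat \<Rightarrow> nat \<Rightarrow> real) \<Rightarrow> nat \<Rightarrow> nat \<Rightarrow> real" where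
  "sojourn U V J n = dep U V J n - arrival U n"

end

theory Submission imports Defs begin

lemma phi_ge1: "phi x \<ge> 1"
proof (cases "x \<ge> exp (exp 1)")
  case True
  have x1: "x \<ge> 1" using True by (smt (verit) exp_ge_add_one_self exp_gt_zero)
  have "ln x \<ge> exp 1" using True by (smt (verit) exp_gt_zero ln_ge_iff)
  then have "ln (ln x) \<ge> 1" by (smt (verit) exp_gt_zero ln_ge_iff)
  then have "x * ln (ln x) \<ge> 1" using x1 mult_mono[of 1 x 1 "ln (ln x)"] by simp
  then show ?thesis using True unfolding phi_def by simp
qed (simp add: phi_def)

lemma phi_nonneg: "phi x \<ge> 0"
  using phi_ge1[of x] by simp

lemma phi_mono: assumes "x \<le> y" shows "phi x \<le> phi y"
proof (cases "y \<ge> exp (exp 1)")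
  case True
  show ?thesis
  proof (cases "x \<ge> exp (exp 1)")
    case True2: True
    have x1: "x \<ge> 1" using True2 by (smt (verit) exp_ge_add_one_self exp_gt_zero)
    have "ln x \<ge> exp 1" using True2 by (smt (verit) exp_gt_zero ln_ge_iff)
    then have l1: "ln (ln x) \<ge> 1" by (smt (verit) exp_gt_zero ln_ge_iff)
    have "ln x \<le> ln y" using x1 assms by simp
    then have "ln (ln x) \<le> ln (ln y)" using \<open>ln x \<ge> exp 1\<close>
      by (smt (verit) exp_gt_zero ln_le_cancel_iff)
    then have "x * ln (ln x) \<le> y * ln (ln y)" using x1 l1 assms by (smt (verit) mult_mono)
    then show ?thesis using True True2 unfolding phi_def by simp
  next
    case False
    then show ?thesis using phi_ge1[of y] by (simp add: phi_def)
  qed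
next
  case False
  then show ?thesis using assms by (simp add: phi_def)
qed


lemma arr_split: "k \<le> n \<Longrightarrow> arrival U n = arrival U k + (\<Sum>i=k+1..n. U i)"
  unfolding arrival_def
  by (metis le_add_diff_inverse sum.ub_add_nat le_add1 le_SucI Suc_eq_plus1 add_le_cancel_left le0 plus_1_eq_Suc)

lemma tail_step: "Suc i \<le> n \<Longrightarrow> (\<Sum>l=i+1..n. f l) = f (Suc i) + (\<Sum>l=Suc i+1..n. f l)"
  by (simp add: sum.atLeast_Suc_atMost)

lemma core:
  fixes U :: "nat \<Rightarrow> real" and V :: "nat \<Rightarrow> nat \<Rightarrow> real" and mu :: "nat \<Rightarrow> real"
  assumes lam: "lam > 0" and G: "G \<ge> 0" and r: "r \<ge> 0"
    and Sb: "\<And>k. k \<le> n \<Longrightarrow> (\<Sum>i=k+1..n. U i) \<ge> (real n - real k)/lam - G*phi(real n - real k)"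
    and Tu: "\<And>k j. k \<le> n \<Longrightarrow> 1 \<le> j \<Longrightarrow> j \<le> J \<Longrightarrow> (\<Sum>i=k+1..n. V j i) \<le> (real n - real k)/mu j + G*phi(real n - real k)"
    and Tl: "\<And>k j. k \<le> n \<Longrightarrow> 1 \<le> j \<Longrightarrow> j \<le> J \<Longrightarrow> (\<Sum>i=k+1..n. V j i) \<ge> (real n - real k)/mu j - G*phi(real n - real k)"
    and mur: "\<And>j. 1 \<le> j \<Longrightarrow> j \<le> J \<Longrightarrow> 1/mu j \<le> r"
    and mupos: "\<And>j. 1 \<le> j \<Longrightarrow> j \<le> J \<Longrightarrow> mu j > 0"
  shows "\<exists>k'\<le>n. sojourn U V J n \<le> real J * r + (real n - real k')*(r - 1/lam) + (2*real J+1)*G*phi(real n - real k' + 1)"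
proof -
  define S where "S k = (\<Sum>i=k+1..n. U i)" for k
  define T where "T j k = (\<Sum>i=k+1..n. V j i)" for j k
  define L where "L k = (real n - real k)*(r - 1/lam)" for k
  have O: "\<And>i. j \<le> J \<Longrightarrow> i \<le> n \<Longrightarrow> \<exists>k'\<le>i. dep U V j i - arrival U n \<le>
     - (real n - real i)*r + real j*r + L k' + (2*real j+1)*G*phi(real n - real k' + 1)" for j
  proof (induction j)
    case 0
    have "dep U V 0 i - arrival U n = - S i" using arr_split[OF 0(2), of U] by (simp add: S_def)
    also have "\<dots> \<le> - (real n - real i)/lam + G*phi(real n - real i)" using Sb[OF 0(2)] minus_divide_left[of "real n - real i" lam] unfolding S_def by linarith
    also have "\<dots> \<le> - (real n - real i)/lam + G*phi(real n - real i + 1)"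
      using phi_mono[of "real n - real i" "real n - real i + 1"] G by (simp add: mult_left_mono)
    also have "\<dots> = - (real n - real i)*r + real 0*r + L i + (2*real 0+1)*G*phi(real n - real i + 1)"
      by (simp add: L_def algebra_simps add_divide_distrib[symmetric])
    finally show ?case by blast
  next
    case (Suc j)
    note IHo = Suc.IH
    have jJ: "j \<le> J" using Suc.prems by simp
    have j1: "1 \<le> Suc j" "Suc j \<le> J" using Suc by auto
    have mu0: "mu (Suc j) > 0" using mupos j1 by blast
    have I: "\<And>i. i \<le> n \<Longrightarrow> \<exists>k\<le>i. \<exists>k'\<le>k. dep U V (Suc j) i - arrival U n + T (Suc j) i \<le>
      - (real n - real k)*r + (real n - real k + 1)/mu (Suc j) + real j*r + L k' + (2*real j+2)*G*phi(real n - real k' + 1)"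
    proof -
      fix i show "i \<le> n \<Longrightarrow> ?thesis i"
      proof (induction i)
        case 0
        have an: "arrival U n = S 0" using arr_split[of 0 n U] by (simp add: S_def arrival_def)
        have s0: "S 0 \<ge> real n/lam - G*phi(real n)" using Sb[of 0] by (simp add: S_def)
        have t0: "T (Suc j) 0 \<le> real n/mu (Suc j) + G*phi(real n)" using Tu[of 0 "Suc j"] j1 by (simp add: T_def)
        have p: "G*phi(real n) \<le> G*phi(real n + 1)" using phi_mono[of "real n" "real n + 1"] G by (simp add: mult_left_mono)
        have q: "0 \<le> real j * G*phi(real n + 1)" using G phi_nonneg by simp
        have w: "0 \<le> real j * r" using r by simp
        have m: "real n/mu (Suc j) \<le> (real n + 1)/mu (Suc j)" using mu0 by (simp add: divide_right_mono)
        have "dep U V (Suc j) 0 - arrival U n + T (Suc j) 0 \<le>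
          - (real n - real 0)*r + (real n - real 0 + 1)/mu (Suc j) + real j*r + L 0 + (2*real j+2)*G*phi(real n - real 0 + 1)"
          using an s0 t0 p q w m by (simp add: L_def algebra_simps)
        then show ?case by blast
      next
        case (Suc i)
        have ts: "T (Suc j) i = V (Suc j) (Suc i) + T (Suc j) (Suc i)" using tail_step[OF Suc(2)] by (simp add: T_def)
        have e: "dep U V (Suc j) (Suc i) - arrival U n + T (Suc j) (Suc i) =
           max (dep U V (Suc j) i - arrival U n + T (Suc j) i) (dep U V j (Suc i) - arrival U n + T (Suc j) i)"
          using ts by (simp add: max_def)
        show ?case
        proof (cases "dep U V j (Suc i) \<le> dep U V (Suc j) i")
          case True
          then have "dep U V (Suc j) (Suc i) - arrival U n + T (Suc j) (Suc i) = dep U V (Suc j) i - arrival U n + T (Suc j) i"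
            using e by simp
          moreover obtain k k' where "k \<le> i" "k' \<le> k" "dep U V (Suc j) i - arrival U n + T (Suc j) i \<le>
      - (real n - real k)*r + (real n - real k + 1)/mu (Suc j) + real j*r + L k' + (2*real j+2)*G*phi(real n - real k' + 1)"
            using Suc by auto
          ultimately show ?thesis by (metis le_SucI)
        next
          case False
          then have eq: "dep U V (Suc j) (Suc i) - arrival U n + T (Suc j) (Suc i) = dep U V j (Suc i) - arrival U n + T (Suc j) i"
            using e by simp
          obtain k' where k': "k' \<le> Suc i" "dep U V j (Suc i) - arrival U n \<le>
             - (real n - real (Suc i))*r + real j*r + L k' + (2*real j+1)*G*phi(real n - real k' + 1)"
            using IHo[OF jJ Suc(2)] by blast
          have t: "T (Suc j) i \<le> (real n - real i)/mu (Suc j) + G*phi(real n - real i)"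
            using Tu[of i "Suc j"] j1 Suc(2) by (simp add: T_def)
          have p: "G*phi(real n - real i) \<le> G*phi(real n - real k' + 1)"
            using phi_mono[of "real n - real i" "real n - real k' + 1"] G k'(1) by (simp add: mult_left_mono)
          have "dep U V (Suc j) (Suc i) - arrival U n + T (Suc j) (Suc i) \<le>
            - (real n - real (Suc i))*r + (real n - real (Suc i) + 1)/mu (Suc j) + real j*r + L k' + (2*real j+2)*G*phi(real n - real k' + 1)"
            using eq k'(2) t p by (simp add: algebra_simps)
          then show ?thesis using k'(1) by blast
        qed
      qed
    qed
    obtain k k' where kk: "k \<le> i" "k' \<le> k" "dep U V (Suc j) i - arrival U n + T (Suc j) i \<le>
      - (real n - real k)*r + (real n - real k + 1)/mu (Suc j) + real j*r + L k' + (2*real j+2)*G*phi(real n - real k' + 1)"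
      using I[OF Suc(3)] by blast
    have tl: "T (Suc j) i \<ge> (real n - real i)/mu (Suc j) - G*phi(real n - real i)"
      using Tl[of i "Suc j"] j1 Suc(3) by (simp add: T_def)
    have p: "G*phi(real n - real i) \<le> G*phi(real n - real k' + 1)"
      using phi_mono[of "real n - real i" "real n - real k' + 1"] G kk by (simp add: mult_left_mono)
    have dd: "(real n - real k + 1)/mu (Suc j) - (real n - real i)/mu (Suc j) = (real i - real k + 1) * (1/mu (Suc j))"
      using mu0 by (simp add: field_simps)
    have ik: "(real i - real k + 1) * (1/mu (Suc j)) \<le> (real i - real k + 1) * r"
      using mur[OF j1] kk(1) by (intro mult_left_mono) auto
    have "dep U V (Suc j) i - arrival U n \<le>
     - (real n - real i)*r + real (Suc j)*r + L k' + (2*real (Suc j)+1)*G*phi(real n - real k' + 1)"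
      using kk(3) tl p dd ik by (simp add: algebra_simps)
    then show ?case using kk by (meson order_trans)
  qed
  obtain k' where "k' \<le> n" "dep U V J n - arrival U n \<le>
     - (real n - real n)*r + real J*r + L k' + (2*real J+1)*G*phi(real n - real k' + 1)"
    using O[of J n] by auto
  then show ?thesis unfolding sojourn_def L_def by auto
qed


lemma key:
  fixes Jr lam G del x :: real
  assumes J: "Jr \<ge> 1" and lam: "lam > 0" and del: "del > 0" "del \<le> 1"
    and big: "lam * G \<ge> exp (2 * exp 1)" and x: "x \<ge> 1"
  shows "(2*Jr+1)*G*phi x \<le> del*x/lam + 7*Jr^2*G^2*lam/del * ln (ln (Jr*lam*G/del))"
proof -
  define K where "K = Jr*lam*G/del"
  define LL where "LL = ln (ln K)"
  define c where "c = 2*Jr+1"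
  define a where "a = del/lam"
  have a: "a > 0" using del lam by (simp add: a_def)
  have e2: "exp 1 \<ge> (2::real)" using exp_ge_add_one_self[of 1] by simp
  have lG: "lam * G > 0" using big by (smt (verit) exp_gt_zero)
  have G: "G > 0" using lG lam by (simp add: zero_less_mult_iff)
  have KlG: "K \<ge> lam * G"
  proof -
    have "Jr/del \<ge> 1" using J del by simp
    then have "(Jr/del) * (lam*G) \<ge> 1 * (lam*G)" using lG by (intro mult_right_mono) auto
    then show ?thesis by (simp add: K_def field_simps)
  qed
  have Kbig: "K \<ge> exp (2 * exp 1)" using KlG big by simp
  have Kpos: "K > 0" using Kbig by (smt (verit) exp_gt_zero)
  have lnK: "ln K \<ge> 2 * exp 1" using Kbig Kpos by (simp add: ln_ge_iff)
  have lnK4: "ln K \<ge> 4" using lnK e2 by simp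
  have LL1: "LL \<ge> 1" unfolding LL_def using lnK e2
    by (smt (verit) exp_gt_zero ln_ge_iff)
  have K2: "K \<ge> 2" using Kbig exp_ge_add_one_self[of "2*exp 1"] e2 by linarith
  have R: "7*Jr^2*G^2*lam/del * ln (ln (Jr*lam*G/del)) = 7*Jr*G*K*LL"
    unfolding K_def LL_def using del by (simp add: power2_eq_square field_simps)
  have cJ: "c \<le> 3*Jr" "c > 0" using J by (auto simp: c_def)
  have ax: "del*x/lam = a*x" by (simp add: a_def)
  have KJ: "K = Jr*G/a" unfolding K_def a_def using lam del by (simp add: field_simps)
  show ?thesis
  proof (cases "x \<ge> exp (exp 1)")
    case False
    then have "phi x = 1" by (simp add: phi_def)
    moreover have "c*G \<le> 7*Jr*G*K*LL"
    proof -
      have "K*LL \<ge> 1" using K2 LL1 mult_mono[of 1 K 1 LL] by simp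
      then have "Jr*(K*LL) \<ge> Jr*1" using J by (intro mult_left_mono) auto
      then have "c \<le> 7*Jr*(K*LL)" using cJ J by linarith
      then have "c*G \<le> (7*Jr*(K*LL))*G" using G by (intro mult_right_mono) auto
      then show ?thesis by (simp add: algebra_simps)
    qed
    moreover have "0 \<le> a*x" using a x by simp
    ultimately show ?thesis unfolding R ax c_def[symmetric] by simp
  next
    case True
    define L where "L = ln (ln x)"
    have x0: "x > 0" using x by simp
    have lnx: "ln x \<ge> exp 1" using True x0 by (simp add: ln_ge_iff)
    have lnx0: "ln x > 0" using lnx by (smt (verit) exp_gt_zero)
    have L1: "L \<ge> 1" unfolding L_def using lnx by (smt (verit) exp_gt_zero ln_ge_iff)
    define s where "s = sqrt (x*L)"
    have ss: "s^2 = x*L" "s \<ge> 0" using x L1 by (auto simp: s_def)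
    have ph: "phi x = s" using True by (simp add: phi_def s_def L_def)
    show ?thesis
    proof (cases "ln x \<le> (ln K)^3")
      case True
      have lnK0: "ln K > 0" using lnK4 by simp
      have "L \<le> ln ((ln K)^3)" unfolding L_def using True lnx0 lnK0 by simp
      also have "\<dots> = 3 * LL" unfolding LL_def by (simp add: ln_realpow)
      finally have L3: "L \<le> 3*LL" .
      have amgm: "c*G*s \<le> a*x + c^2*G^2*L/(4*a)"
      proof -
        have "0 \<le> (a*s - c*G*L/2)^2" by simp
        then have "a*c*G*L*s \<le> a^2*(x*L) + c^2*G^2*L^2/4"
          unfolding ss(1)[symmetric] by (simp add: power2_eq_square algebra_simps)
        moreover have "(a*L)*(a*x + c^2*G^2*L/(4*a)) = a^2*(x*L) + c^2*G^2*L^2/4"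
          using a by (simp add: field_simps power2_eq_square)
        moreover have "(a*L)*(c*G*s) = a*c*G*L*s" by (simp add: mult_ac)
        ultimately have "(a*L)*(c*G*s) \<le> (a*L)*(a*x + c^2*G^2*L/(4*a))" by linarith
        then show ?thesis using a L1 by (simp add: mult_le_cancel_left_pos)
      qed
      have "c^2*G^2*L/(4*a) \<le> (3*Jr)^2*G^2*(3*LL)/(4*a)"
      proof -
        have "c^2 \<le> (3*Jr)^2" using cJ by (intro power_mono) auto
        then have "c^2*(G^2*L) \<le> (3*Jr)^2*(G^2*(3*LL))"
          using L3 L1 G by (intro mult_mono) auto
        then show ?thesis using a by (simp add: divide_right_mono mult.assoc)
      qed
      also have "\<dots> = (27/4) * Jr*G*(Jr*G/a)*LL" using a by (simp add: power2_eq_square field_simps)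
      also have "\<dots> \<le> 7*Jr*G*K*LL"
        unfolding KJ[symmetric] using J G Kpos LL1 by (simp add: mult_right_mono)
      finally show ?thesis unfolding R ax ph c_def[symmetric] using amgm by simp
    next
      case False
      have "ln x > 16 * ln K"
      proof -
        have "(ln K)^2 \<ge> 4^2" using lnK4 by (intro power_mono) auto
        then have "(ln K)^2 * ln K \<ge> 16 * ln K" using lnK4 by (intro mult_right_mono) auto
        then show ?thesis using False by (simp add: power3_eq_cube power2_eq_square)
      qed
      then have "ln x > ln (K^16)" using Kpos by (simp add: ln_realpow)
      then have xK: "x > K^16" using Kpos x0 by (smt (verit) ln_le_cancel_iff zero_less_power)
      define q where "q = sqrt x"
      have qq: "q*q = x" "q \<ge> 0" using x by (auto simp: q_def)
      have "q^2 > (K^8)^2" using xK qq by (simp add: power2_eq_square flip: power_add)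
      then have qK: "q > K^8" using qq(2) by (smt (verit) power_mono)
      have "K^6 \<ge> 2^6" using K2 by (intro power_mono) auto
      then have "K^6 \<ge> 18" by simp
      then have "K^2*K^6 \<ge> K^2*18" using Kpos by (intro mult_left_mono) auto
      then have q18: "q \<ge> 18*K^2" using qK by (simp flip: power_add)
      have Lx: "L \<le> 2*q"
      proof -
        have "L \<le> ln x" unfolding L_def using lnx0 ln_bound by simp
        also have "ln x = 2 * ln q" using x0 by (simp add: q_def ln_sqrt)
        also have "ln q \<le> q" using x0 by (simp add: q_def ln_bound)
        finally show ?thesis by simp
      qed
      have "9*K^2*L \<le> 9*K^2*(2*q)" using Lx Kpos by simp
      also have "\<dots> = (18*K^2)*q" by simp
      also have "\<dots> \<le> q*q" using q18 qq(2) by (intro mult_right_mono) auto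
      finally have m: "9*K^2*L \<le> x" using qq by simp
      have "(c*G*s)^2 \<le> (a*x)^2"
      proof -
        have "(c*G*s)^2 = c^2*G^2*(x*L)" using ss by (simp add: power_mult_distrib)
        also have "\<dots> \<le> (3*Jr)^2*G^2*(x*L)"
          using cJ x L1 by (intro mult_right_mono power_mono) auto
        also have "\<dots> = a^2*x*(9*K^2*L)" unfolding KJ using a by (simp add: power2_eq_square field_simps)
        also have "\<dots> \<le> a^2*x*x" using m a x by (intro mult_left_mono) auto
        also have "\<dots> = (a*x)^2" by (simp add: power_mult_distrib power2_eq_square mult.assoc)
        finally show ?thesis .
      qed
      moreover have "0 \<le> a*x" using a x by simp
      ultimately have "c*G*s \<le> a*x" by (rule power2_le_imp_le)
      moreover have "0 \<le> 7*Jr*G*K*LL" using J G Kpos LL1 by simp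
      ultimately show ?thesis unfolding R ax ph c_def[symmetric] by linarith
    qed
  qed
qed


theorem theorem1:
  fixes U :: "nat \<Rightarrow> real" and V :: "nat \<Rightarrow> nat \<Rightarrow> real"
    and J n :: nat and lambda Ga :: real and mu Gs :: "nat \<Rightarrow> real"
  assumes J: "J \<ge> 1" and n: "n \<ge> 1"
    and U_nonneg: "\<And>l. 1 \<le> l \<Longrightarrow> l \<le> n \<Longrightarrow> U l \<ge> 0"
    and V_nonneg: "\<And>j i. 1 \<le> j \<Longrightarrow> j \<le> J \<Longrightarrow> 1 \<le> i \<Longrightarrow> i \<le> n \<Longrightarrow> V j i \<ge> 0"
    and lam: "lambda > 0"
    and mu: "\<And>j. 1 \<le> j \<Longrightarrow> j \<le> J \<Longrightarrow> mu j > 0"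
    and Ga: "Ga \<ge> 0"
    and Gs: "\<And>j. 1 \<le> j \<Longrightarrow> j \<le> J \<Longrightarrow> Gs j \<ge> 0"
    and arr: "\<And>k. k < n \<Longrightarrow>
       \<bar>(\<Sum>i=k+1..n. U i) - (n - k) / lambda\<bar> \<le> Ga * phi (real (n - k))"
    and srv: "\<And>k j. k < n \<Longrightarrow> 1 \<le> j \<Longrightarrow> j \<le> J \<Longrightarrow>
       \<bar>(\<Sum>i=k+1..n. V j i) - (n - k) / mu j\<bar> \<le> Gs j * phi (real (n - k))"
    and big: "lambda * max Ga (Max (Gs ` {1..J})) \<ge> exp (2 * exp 1)"
    and rho: "lambda / Min (mu ` {1..J}) < 1"
  shows "sojourn U V J n \<le>
     (let G = max Ga (Max (Gs ` {1..J})); r = lambda / Min (mu ` {1..J}) in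
       7 * J^2 * G^2 * lambda / (1 - r) * ln (ln (J * lambda * G / (1 - r))) + J / lambda)"
proof -
  define Gm where "Gm = max Ga (Max (Gs ` {1..J}))"
  define Mn where "Mn = Min (mu ` {1..J})"
  define r where "r = 1 / Mn"
  define del where "del = 1 - lambda / Mn"
  have ne: "{1..J} \<noteq> {}" using J by auto
  have GsG: "Gs j \<le> Gm" if "1 \<le> j" "j \<le> J" for j
    using that unfolding Gm_def by (intro max.coboundedI2 Max_ge) auto
  have Gm0: "Gm \<ge> 0" using Ga unfolding Gm_def by simp
  have GaG: "Ga \<le> Gm" unfolding Gm_def by simp
  have Mnin: "Mn \<in> mu ` {1..J}" unfolding Mn_def using ne by (intro Min_in) auto
  have Mn0: "Mn > 0" using Mnin mu by auto
  have Mnle: "Mn \<le> mu j" if "1 \<le> j" "j \<le> J" for j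
    using that unfolding Mn_def by (intro Min_le) auto
  have mur: "1 / mu j \<le> r" if "1 \<le> j" "j \<le> J" for j
    unfolding r_def using Mnle[OF that] Mn0 by (intro divide_left_mono) auto
  have r0: "r \<ge> 0" using Mn0 by (simp add: r_def)
  have rl: "lambda < Mn" using rho Mn0 unfolding Mn_def[symmetric] by (simp add: field_simps)
  have del: "del > 0" "del \<le> 1" using rl Mn0 lam by (auto simp: del_def field_simps)
  have phn: "\<And>k. k \<le> n \<Longrightarrow> Gm * phi (real n - real k) \<ge> 0" using Gm0 phi_nonneg by simp
  have Sb: "\<And>k. k \<le> n \<Longrightarrow> (\<Sum>i=k+1..n. U i) \<ge> (real n - real k)/lambda - Gm*phi(real n - real k)"
  proof -
    fix k assume k: "k \<le> n"
    show "(\<Sum>i=k+1..n. U i) \<ge> (real n - real k)/lambda - Gm*phi(real n - real k)"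
    proof (cases "k < n")
      case True
      have "Ga * phi (real (n - k)) \<le> Gm * phi (real (n - k))" using GaG phi_nonneg by (intro mult_right_mono) auto
      then show ?thesis using arr[OF True] True by (simp add: of_nat_diff abs_le_iff)
    next
      case False
      then show ?thesis using k phn[of n] by simp
    qed
  qed
  have Tb: "\<And>k j. k \<le> n \<Longrightarrow> 1 \<le> j \<Longrightarrow> j \<le> J \<Longrightarrow>
      \<bar>(\<Sum>i=k+1..n. V j i) - (real n - real k)/mu j\<bar> \<le> Gm*phi(real n - real k)"
  proof -
    fix k j assume k: "k \<le> n" and j: "1 \<le> j" "j \<le> J"
    show "\<bar>(\<Sum>i=k+1..n. V j i) - (real n - real k)/mu j\<bar> \<le> Gm*phi(real n - real k)"
    proof (cases "k < n")
      case True
      have "Gs j * phi (real (n - k)) \<le> Gm * phi (real (n - k))" using GsG[OF j] phi_nonneg by (intro mult_right_mono) auto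
      then show ?thesis using srv[OF True j] True by (simp add: of_nat_diff)
    next
      case False
      then show ?thesis using k phn[of n] by simp
    qed
  qed
  have Tu: "(\<Sum>i=k+1..n. V j i) \<le> (real n - real k)/mu j + Gm*phi(real n - real k)"
    if "k \<le> n" "1 \<le> j" "j \<le> J" for k j
    using Tb[OF that] by (simp add: abs_le_iff)
  have Tl: "(\<Sum>i=k+1..n. V j i) \<ge> (real n - real k)/mu j - Gm*phi(real n - real k)"
    if "k \<le> n" "1 \<le> j" "j \<le> J" for k j
    using Tb[OF that] by (simp add: abs_le_iff)
  obtain k' where k': "k' \<le> n" "sojourn U V J n \<le> real J * r + (real n - real k')*(r - 1/lambda) + (2*real J+1)*Gm*phi(real n - real k' + 1)"
    using core[of lambda Gm r n U J V mu, OF lam Gm0 r0 Sb Tu Tl mur mu] by blast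
  define m where "m = real n - real k'"
  have m0: "m \<ge> 0" using k' by (simp add: m_def)
  have bigG: "lambda * Gm \<ge> exp (2 * exp 1)" using big by (simp add: Gm_def)
  define R where "R = 7*(real J)^2*Gm^2*lambda/del * ln (ln (real J*lambda*Gm/del))"
  have K: "(2*real J+1)*Gm*phi (m+1) \<le> del*(m+1)/lambda + R"
    unfolding R_def using key[of "real J" lambda del Gm "m+1", OF _ lam del bigG] J m0 by simp
  have e1: "del*(m+1)/lambda = m/lambda + 1/lambda - m*r - r"
    using lam Mn0 by (simp add: del_def r_def field_simps)
  have rl2: "r \<le> 1/lambda" unfolding r_def using rl lam by (intro divide_left_mono) auto
  have "(real J - 1) * r \<le> (real J - 1) * (1/lambda)" using J rl2 by (intro mult_left_mono) auto
  then have fin: "sojourn U V J n \<le> R + real J / lambda"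
    using k'(2) K e1 unfolding m_def[symmetric] by (simp add: algebra_simps)
  show ?thesis using fin unfolding R_def Let_def del_def Gm_def Mn_def by simp
qed

end
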